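(* Let $(S_n,X_n)_{n\ge0}$ be an alternating non-homogeneous semi-Markov process with $S_0=1$, $X_0=0$, semi-Markov kernels $G_Y,G_Z$, with $X_n\to\infty$ almost surely, cycle-counting process $N(t)$ and renewal function $M$. Define the age and excess with respect to the $Y$-phase by $$A(t)=(t-X_{2N(t)})\,\mathbf 1\{X_{2N(t)+1}>t\},\qquad B(t)=(X_{2N(t)+1}-t)\,\mathbf 1\{X_{2N(t)+1}>t\}.$$ Then for all $t\ge0$, $0\le x\le t$ and $z\ge0$, $$\mathbb P(A(t)\le x,B(t)\le z)=G_Y(0,t)-\int_{t-x}^{t}[1-G_Y(s,t+z-s)]\,dM(s)-\int_0^{t-x}[1-G_Y(s,t-s)]\,dM(s)+\mathbf 1\{x=t\}\,[G_Y(0,t+z)-G_Y(0,t)].$$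
   Context: Let $(S_n,X_n)_{n\ge0}$ be random variables on a probability space with $S_n\in\{0,1\}$, $0=X_0\le X_1\le X_2\le\cdots$, $S_0=1$, and alternating states: $S_n=1$ for even $n$ and $S_n=0$ for odd $n$. Write $T_{n+1}=X_{n+1}-X_n$. The process is called an alternating non-homogeneous semi-Markov process with semi-Markov kernels $G_Y,G_Z$ if for every $n\ge 0$ the conditional distribution of $T_{n+1}$ given $(S_0,X_0),\dots,(S_n,X_n)$ depends only on $(S_n,X_n)$ (and not on $n$), with $\mathbb P(T_{n+1}\le \tau\mid S_n=1,X_n=x)=G_Y(x,\tau)$ and $\mathbb P(T_{n+1}\le\tau\mid S_n=0,X_n=x)=G_Z(x,\tau)$ for all $x,\tau\ge 0$; here for each $x\ge0$, $G_Y(x,\cdot)$ and $G_Z(x,\cdot)$ are distribution functions on $[0,\infty)$, jointly measurable in $(x,\tau)$, absolutely continuous with densities $g_Y(x,\cdot)$, $g_Z(x,\cdot)$. Periods in state $1$ are $Y$-phases and periods in state $0$ are $Z$-phases. The cycle-counting process is $N(t)=\sup\{n\in\mathbb N_0: X_{2n}\le t\}$ and the renewal function is $M(t)=\mathbb E N(t)=\sum_{n=1}^\infty \mathbb P(X_{2n}\le t)$, $t\ge0$; integrals $dM(s)$ are Lebesgue–Stieltjes integrals with respect to $M$. *)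

theory Defs
  imports "HOL-Probability.Probability"
begin

text \<open>sigma-algebra generated by X_0, ..., X_n (the history up to step n; the states
  S_k are deterministic, S_k = 1 iff k even, so they generate nothing extra).\<close>
definition history :: "'a measure \<Rightarrow> (nat \<Rightarrow> 'a \<Rightarrow> real) \<Rightarrow> nat \<Rightarrow> 'a measure" where
  "history P X n = sigma (space P) {X i -` B \<inter> space P | i B. i \<le> n \<and> B \<in> sets borel}"

definition cyc_count :: "(nat \<Rightarrow> 'a \<Rightarrow> real) \<Rightarrow> real \<Rightarrow> 'a \<Rightarrow> nat" where
  "cyc_count X t \<omega> = Sup {n. X (2 * n) \<omega> \<le> t}"

definition age :: "(nat \<Rightarrow> 'a \<Rightarrow> real) \<Rightarrow> real \<Rightarrow> 'a \<Rightarrow> real" where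
  "age X t \<omega> = (t - X (2 * cyc_count X t \<omega>) \<omega>) *
      indicator {r. r > t} (X (2 * cyc_count X t \<omega> + 1) \<omega>)"

definition excess :: "(nat \<Rightarrow> 'a \<Rightarrow> real) \<Rightarrow> real \<Rightarrow> 'a \<Rightarrow> real" where
  "excess X t \<omega> = (X (2 * cyc_count X t \<omega> + 1) \<omega> - t) *
      indicator {r. r > t} (X (2 * cyc_count X t \<omega> + 1) \<omega>)"

definition renewal_fun :: "'a measure \<Rightarrow> (nat \<Rightarrow> 'a \<Rightarrow> real) \<Rightarrow> real \<Rightarrow> ennreal" where
  "renewal_fun P X t = (\<Sum>n. emeasure P {\<omega> \<in> space P. X (2 * Suc n) \<omega> \<le> t})"

text \<open>The Lebesgue--Stieltjes measure dM of the renewal function: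
  dM(A) = sum_{n>=1} P(X_{2n} \<in> A); its distribution function is renewal_fun,
  i.e. dM({..t}) = M(t).\<close>
definition renewal_measure :: "'a measure \<Rightarrow> (nat \<Rightarrow> 'a \<Rightarrow> real) \<Rightarrow> real measure" where
  "renewal_measure P X = measure_of UNIV (sets borel)
      (\<lambda>A. \<Sum>n. emeasure P {\<omega> \<in> space P. X (2 * Suc n) \<omega> \<in> A})"

definition sm_kernel :: "(real \<Rightarrow> real \<Rightarrow> real) \<Rightarrow> (real \<Rightarrow> real \<Rightarrow> real) \<Rightarrow> bool" where
  "sm_kernel G g \<longleftrightarrow>
     (\<lambda>p. G (fst p) (snd p)) \<in> borel_measurable (restrict_space borel ({0..} \<times> {0..})) \<and>
     (\<forall>x\<ge>0. g x \<in> borel_measurable borel \<and> (\<forall>s\<ge>0. g x s \<ge> 0) \<and>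
        set_integrable lborel {0..} (g x) \<and> (\<integral>s\<in>{0..}. g x s \<partial>lborel) = 1 \<and>
        (\<forall>\<tau><0. G x \<tau> = 0) \<and>
        (\<forall>\<tau>\<ge>0. G x \<tau> = (\<integral>s\<in>{0..\<tau>}. g x s \<partial>lborel)))"

end

theory Submission
  imports Defs
begin

lemma kern_repr:
  assumes k: "sm_kernel G g" and x: "x \<ge> 0"
  shows "G x \<tau> = (LINT s|lborel. indicator {0..\<tau>} s * g x s)"
proof (cases "\<tau> \<ge> 0")
  case True
  then show ?thesis using k x by (simp add: sm_kernel_def set_lebesgue_integral_def)
next
  case False
  then have "{0..\<tau>} = {}" by auto
  then show ?thesis using k x False by (simp add: sm_kernel_def)
qed

lemma kern_int:
  assumes k: "sm_kernel G g" and x: "x \<ge> 0"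
  shows "integrable lborel (\<lambda>s. indicator {0..\<tau>} s * g x s)"
proof -
  have "set_integrable lborel {0..} (g x)" using k x by (simp add: sm_kernel_def)
  then have "set_integrable lborel {0..\<tau>} (g x)"
    by (rule set_integrable_subset) auto
  then show ?thesis by (simp add: set_integrable_def)
qed

lemma kern_mono:
  assumes k: "sm_kernel G g" and x: "x \<ge> 0" and le: "\<tau>1 \<le> \<tau>2"
  shows "G x \<tau>1 \<le> G x \<tau>2"
proof -
  have gn: "\<And>s. s \<ge> 0 \<Longrightarrow> g x s \<ge> 0" using k x by (simp add: sm_kernel_def)
  show ?thesis
    unfolding kern_repr[OF k x]
    by (intro integral_mono kern_int[OF k x]) (use le in \<open>auto simp: indicator_def gn\<close>)
qed

lemma kern_total:
  assumes k: "sm_kernel G g" and x: "x \<ge> 0"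
  shows "(LINT s|lborel. indicator {0..} s * g x s) = 1"
  using k x by (simp add: sm_kernel_def set_lebesgue_integral_def)

lemma kern_le1:
  assumes k: "sm_kernel G g" and x: "x \<ge> 0"
  shows "G x \<tau> \<le> 1"
proof -
  have gn: "\<And>s. s \<ge> 0 \<Longrightarrow> g x s \<ge> 0" using k x by (simp add: sm_kernel_def)
  have i: "integrable lborel (\<lambda>s. indicator {0..} s * g x s)"
    using k x by (simp add: sm_kernel_def set_integrable_def)
  have "G x \<tau> \<le> (LINT s|lborel. indicator {0..} s * g x s)"
    unfolding kern_repr[OF k x]
    by (intro integral_mono kern_int[OF k x] i) (auto simp: indicator_def gn)
  then show ?thesis using kern_total[OF k x] by simp
qed

lemma kern_zero:
  assumes k: "sm_kernel G g" and x: "x \<ge> 0" and t: "\<tau> \<le> 0"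
  shows "G x \<tau> = 0"
proof (cases "\<tau> < 0")
  case True then show ?thesis using k x by (simp add: sm_kernel_def)
next
  case False
  then have t0: "\<tau> = 0" using t by simp
  have "AE s in lborel. indicator {0..\<tau>} s * g x s = 0"
    using AE_lborel_singleton[of 0] by eventually_elim (auto simp: t0 indicator_def)
  then have "(LINT s|lborel. indicator {0..\<tau>} s * g x s) = 0"
    by (rule integral_eq_zero_AE)
  then show ?thesis unfolding kern_repr[OF k x] by simp
qed

lemma kern_nonneg:
  assumes k: "sm_kernel G g" and x: "x \<ge> 0"
  shows "G x \<tau> \<ge> 0"
  using kern_mono[OF k x, of "min \<tau> 0" \<tau>] kern_zero[OF k x, of "min \<tau> 0"] by simp

lemma kern_cont:
  assumes k: "sm_kernel G g" and x: "x \<ge> 0" and lim: "\<tau>s \<longlonglongrightarrow> \<tau>0"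
  shows "(\<lambda>i. G x (\<tau>s i)) \<longlonglongrightarrow> G x \<tau>0"
proof -
  have gm: "g x \<in> borel_measurable borel" using k x by (simp add: sm_kernel_def)
  have i: "integrable lborel (\<lambda>s. indicator {0..} s * g x s)"
    using k x by (simp add: sm_kernel_def set_integrable_def)
  then have ia: "integrable lborel (\<lambda>s. norm (indicator {0..} s * g x s))"
    by (rule integrable_norm)
  have "(\<lambda>i. LINT s|lborel. indicator {0..\<tau>s i} s * g x s) \<longlonglongrightarrow> (LINT s|lborel. indicator {0..\<tau>0} s * g x s)"
  proof (rule integral_dominated_convergence[OF _ _ ia])
    show "(\<lambda>s. indicator {0..\<tau>0} s * g x s) \<in> borel_measurable lborel" using gm by simp
    show "\<And>i. (\<lambda>s. indicator {0..\<tau>s i} s * g x s) \<in> borel_measurable lborel" using gm by simp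
    show "\<And>i. AE s in lborel. norm (indicator {0..\<tau>s i} s * g x s) \<le> norm (indicator {0..} s * g x s)"
      by (auto simp: indicator_def)
    show "AE s in lborel. (\<lambda>i. indicator {0..\<tau>s i} s * g x s) \<longlonglongrightarrow> indicator {0..\<tau>0} s * g x s"
    proof (rule eventually_mono[OF AE_lborel_singleton[of \<tau>0]])
      fix s :: real assume ne: "s \<noteq> \<tau>0"
      have "eventually (\<lambda>i. indicator {0..\<tau>s i} s * g x s = indicator {0..\<tau>0} s * g x s) sequentially"
      proof (cases "s < \<tau>0")
        case True
        have "eventually (\<lambda>i. \<tau>s i > s) sequentially"
          using lim True by (simp add: order_tendstoD(1))
        then show ?thesis by eventually_elim (use True in \<open>auto simp: indicator_def\<close>)
      next
        case False
        then have "s > \<tau>0" using ne by simp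
        then have "eventually (\<lambda>i. \<tau>s i < s) sequentially"
          using lim by (simp add: order_tendstoD(2))
        then show ?thesis by eventually_elim (use \<open>s > \<tau>0\<close> in \<open>auto simp: indicator_def\<close>)
      qed
      then show "(\<lambda>i. indicator {0..\<tau>s i} s * g x s) \<longlonglongrightarrow> indicator {0..\<tau>0} s * g x s"
        by (rule tendsto_eventually)
    qed
  qed
  then show ?thesis unfolding kern_repr[OF k x] .
qed



lemma G_meas:
  assumes k: "sm_kernel G g" and a: "a \<in> borel_measurable M" and b: "b \<in> borel_measurable M"
    and an: "\<And>\<omega>. \<omega> \<in> space M \<Longrightarrow> a \<omega> \<ge> 0"
  shows "(\<lambda>\<omega>. G (a \<omega>) (b \<omega>)) \<in> borel_measurable M"
proof -
  have Gm: "(\<lambda>p. G (fst p) (snd p)) \<in> borel_measurable (restrict_space borel ({0..} \<times> {0..}))"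
    using k by (simp add: sm_kernel_def)
  have "(\<lambda>\<omega>. (a \<omega>, max (b \<omega>) 0)) \<in> measurable M (borel \<Otimes>\<^sub>M borel)"
    using a b by measurable
  then have "(\<lambda>\<omega>. (a \<omega>, max (b \<omega>) 0)) \<in> measurable M (borel :: (real \<times> real) measure)"
    by (simp add: borel_prod)
  then have "(\<lambda>\<omega>. (a \<omega>, max (b \<omega>) 0)) \<in> measurable M (restrict_space borel ({0..} \<times> {0..}))"
    by (intro measurable_restrict_space2) (auto simp: an)
  from measurable_comp[OF this Gm]
  have "(\<lambda>\<omega>. G (a \<omega>) (max (b \<omega>) 0)) \<in> borel_measurable M" by (simp add: comp_def)
  moreover have "\<And>\<omega>. \<omega> \<in> space M \<Longrightarrow> G (a \<omega>) (max (b \<omega>) 0) = G (a \<omega>) (b \<omega>)"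
    using kern_zero[OF k an] by (auto simp: max_def)
  ultimately show ?thesis by (rule measurable_cong[THEN iffD1, rotated]) 
qed

locale smp = prob_space P for P :: "'a measure" +
  fixes X :: "nat \<Rightarrow> 'a \<Rightarrow> real" and GY GZ gY gZ :: "real \<Rightarrow> real \<Rightarrow> real"
  assumes meas[measurable]: "\<And>n. X n \<in> borel_measurable P"
    and X0: "\<And>\<omega>. \<omega> \<in> space P \<Longrightarrow> X 0 \<omega> = 0"
    and mono: "\<And>n \<omega>. \<omega> \<in> space P \<Longrightarrow> X n \<omega> \<le> X (Suc n) \<omega>"
    and kY: "sm_kernel GY gY" and kZ: "sm_kernel GZ gZ"
    and semi_markov: "\<And>n \<tau> A. \<tau> \<ge> 0 \<Longrightarrow> A \<in> sets (history P X n) \<Longrightarrow>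
          measure P ({\<omega> \<in> space P. X (Suc n) \<omega> - X n \<omega> \<le> \<tau>} \<inter> A) =
          (\<integral>\<omega>\<in>A. (if even n then GY (X n \<omega>) \<tau> else GZ (X n \<omega>) \<tau>) \<partial>P)"
begin

definition "Gm n = (if even n then GY else GZ)"
definition "gm n = (if even n then gY else gZ)"

lemma kG: "sm_kernel (Gm n) (gm n)"
  using kY kZ by (simp add: Gm_def gm_def)

lemma Xnn: "\<omega> \<in> space P \<Longrightarrow> 0 \<le> X n \<omega>"
proof (induction n)
  case 0 then show ?case using X0 by simp
next
  case (Suc n) then show ?case using mono[of \<omega> n] by simp
qed

lemma Xle: "\<omega> \<in> space P \<Longrightarrow> m \<le> n \<Longrightarrow> X m \<omega> \<le> X n \<omega>"
  by (rule lift_Suc_mono_le[of "\<lambda>n. X n \<omega>"]) (auto intro: mono)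

definition "Gen n = {X i -` B \<inter> space P | i B. i \<le> n \<and> B \<in> sets borel}"

lemma Gen_sub: "Gen n \<subseteq> Pow (space P)" by (auto simp: Gen_def)

lemma hist_sets: "sets (history P X n) = sigma_sets (space P) (Gen n)"
  unfolding history_def Gen_def[symmetric] using Gen_sub by (simp add: sets_measure_of)

lemma hist_sub: "A \<in> sets (history P X n) \<Longrightarrow> A \<in> sets P"
proof -
  have "Gen n \<subseteq> sets P" by (auto simp: Gen_def)
  then have "sigma_sets (space P) (Gen n) \<subseteq> sets P" by (rule sets.sigma_sets_subset)
  then show "A \<in> sets (history P X n) \<Longrightarrow> A \<in> sets P" by (auto simp: hist_sets)
qed

lemma hist_X: "k \<le> n \<Longrightarrow> B \<in> sets borel \<Longrightarrow> X k -` B \<inter> space P \<in> sets (history P X n)"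
  unfolding hist_sets by (rule sigma_sets.Basic) (auto simp: Gen_def)

lemma hist_space: "space (history P X n) = space P"
  unfolding history_def using Gen_sub Gen_def by (simp add: space_measure_of_conv)

lemma Gm_meas:
  assumes a: "a \<in> borel_measurable P" and b: "b \<in> borel_measurable P"
    and an: "\<And>\<omega>. \<omega> \<in> space P \<Longrightarrow> a \<omega> \<ge> 0"
  shows "(\<lambda>\<omega>. Gm n (a \<omega>) (b \<omega>)) \<in> borel_measurable P"
  by (rule G_meas[OF kG a b an])

lemma sm_all:
  assumes A: "A \<in> sets (history P X n)"
  shows "measure P ({\<omega> \<in> space P. X (Suc n) \<omega> - X n \<omega> \<le> \<tau>} \<inter> A) =
          (\<integral>\<omega>\<in>A. Gm n (X n \<omega>) \<tau> \<partial>P)"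
proof (cases "\<tau> \<ge> 0")
  case True
  then show ?thesis using semi_markov[OF True A] by (simp add: Gm_def)
next
  case False
  have e1: "{\<omega> \<in> space P. X (Suc n) \<omega> - X n \<omega> \<le> \<tau>} = {}"
  proof (safe)
    fix \<omega> assume "\<omega> \<in> space P" "X (Suc n) \<omega> - X n \<omega> \<le> \<tau>"
    then show "\<omega> \<in> {}" using False mono[of \<omega> n] by simp
  qed
  have e2: "(\<integral>\<omega>\<in>A. Gm n (X n \<omega>) \<tau> \<partial>P) = 0"
    unfolding set_lebesgue_integral_def
    using False kern_zero[OF kG Xnn, of _ \<tau>]
    by (intro integral_eq_zero_AE AE_I2) auto
  show ?thesis by (simp only: e1 e2) simp
qed

lemma ind_mult: "indicator A x * ennreal f = ennreal (indicator A x * f)"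
  by (auto simp: indicator_def)

lemma sm_e:
  assumes A: "A \<in> sets (history P X n)"
  shows "emeasure P ({\<omega> \<in> space P. X (Suc n) \<omega> - X n \<omega> \<le> \<tau>} \<inter> A) =
          (\<integral>\<^sup>+\<omega>. indicator A \<omega> * ennreal (Gm n (X n \<omega>) \<tau>) \<partial>P)"
proof -
  have AP: "A \<in> sets P" using hist_sub[OF A] .
  have gm: "(\<lambda>\<omega>. Gm n (X n \<omega>) \<tau>) \<in> borel_measurable P"
    by (rule Gm_meas) (auto simp: Xnn)
  have int: "integrable P (\<lambda>\<omega>. indicator A \<omega> * Gm n (X n \<omega>) \<tau>)"
  proof (rule integrable_const_bound[where B=1])
    show "AE x in P. norm (indicator A x * Gm n (X n x) \<tau>) \<le> 1"
      by (rule AE_I2) (auto simp: indicator_def kern_le1[OF kG Xnn] kern_nonneg[OF kG Xnn])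
  qed (use gm AP in measurable)
  have "emeasure P ({\<omega> \<in> space P. X (Suc n) \<omega> - X n \<omega> \<le> \<tau>} \<inter> A) =
     ennreal (measure P ({\<omega> \<in> space P. X (Suc n) \<omega> - X n \<omega> \<le> \<tau>} \<inter> A))"
    by (rule emeasure_eq_measure)
  also have "\<dots> = ennreal (\<integral>\<omega>. indicator A \<omega> * Gm n (X n \<omega>) \<tau> \<partial>P)"
    using sm_all[OF A] by (simp add: set_lebesgue_integral_def)
  also have "\<dots> = (\<integral>\<^sup>+\<omega>. ennreal (indicator A \<omega> * Gm n (X n \<omega>) \<tau>) \<partial>P)"
    by (rule nn_integral_eq_integral[OF int, symmetric])
       (rule AE_I2, auto simp: kern_nonneg[OF kG Xnn])
  finally show ?thesis by (simp add: ind_mult)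
qed

end


lemma fl_bounds:
  fixes y kk :: real assumes y: "y \<ge> 0" and k: "kk > 0"
  shows "real (nat \<lfloor>kk * y\<rfloor>) / kk \<le> y" "y < real (Suc (nat \<lfloor>kk * y\<rfloor>)) / kk"
    "y - 1 / kk < real (nat \<lfloor>kk * y\<rfloor>) / kk"
proof -
  have nn: "kk * y \<ge> 0" using y k by simp
  have r: "real (nat \<lfloor>kk * y\<rfloor>) = of_int \<lfloor>kk * y\<rfloor>" using nn by simp
  have a: "of_int \<lfloor>kk * y\<rfloor> \<le> kk * y" by (rule of_int_floor_le)
  have b: "kk * y < of_int \<lfloor>kk * y\<rfloor> + 1" by (rule real_of_int_floor_add_one_gt)
  show "real (nat \<lfloor>kk * y\<rfloor>) / kk \<le> y" using a k r by (simp add: divide_le_eq mult.commute)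
  have e: "real (Suc (nat \<lfloor>kk * y\<rfloor>)) = of_int \<lfloor>kk * y\<rfloor> + 1" using r by simp
  have "y * kk < real (Suc (nat \<lfloor>kk * y\<rfloor>))" unfolding e using b by (simp add: mult.commute)
  then show "y < real (Suc (nat \<lfloor>kk * y\<rfloor>)) / kk" using k by (simp add: less_divide_eq)
  have "kk * y - 1 < real (nat \<lfloor>kk * y\<rfloor>)" using b r by linarith
  then have "(kk * y - 1) / kk < real (nat \<lfloor>kk * y\<rfloor>) / kk" using k by (rule divide_strict_right_mono)
  moreover have "(kk * y - 1) / kk = y - 1 / kk" using k by (simp add: field_simps)
  ultimately show "y - 1 / kk < real (nat \<lfloor>kk * y\<rfloor>) / kk" by simp
qed

lemma fl_char:
  fixes y kk :: real assumes y: "y \<ge> 0" and k: "kk > 0"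
  shows "(real j / kk \<le> y \<and> y < real (Suc j) / kk) \<longleftrightarrow> j = nat \<lfloor>kk * y\<rfloor>"
proof
  assume h: "real j / kk \<le> y \<and> y < real (Suc j) / kk"
  then have "real j \<le> kk * y" "kk * y < real j + 1" using k
    by (auto simp: divide_le_eq less_divide_eq mult.commute)
  then have "\<lfloor>kk * y\<rfloor> = int j" by (simp add: floor_eq_iff)
  then show "j = nat \<lfloor>kk * y\<rfloor>" by simp
next
  assume "j = nat \<lfloor>kk * y\<rfloor>"
  then show "real j / kk \<le> y \<and> y < real (Suc j) / kk" using fl_bounds[OF y k] by simp
qed

context smp begin

lemma L1:
  assumes A: "A \<in> sets (history P X n)"
  shows "emeasure P ({\<omega> \<in> space P. X (Suc n) \<omega> \<le> c} \<inter> A) =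
           (\<integral>\<^sup>+\<omega>. indicator A \<omega> * ennreal (Gm n (X n \<omega>) (c - X n \<omega>)) \<partial>P)"
    and "emeasure P ({\<omega> \<in> space P. X (Suc n) \<omega> < c} \<inter> A) =
           (\<integral>\<^sup>+\<omega>. indicator A \<omega> * ennreal (Gm n (X n \<omega>) (c - X n \<omega>)) \<partial>P)"
proof -
  define F where "F \<omega> = indicator A \<omega> * ennreal (Gm n (X n \<omega>) (c - X n \<omega>))" for \<omega>
  define kk where "kk k = real (Suc k)" for k
  define fl where "fl k \<omega> = nat \<lfloor>kk k * X n \<omega>\<rfloor>" for k \<omega>
  define Aj where "Aj k j = A \<inter> (X n -` {real j / kk k ..< real (Suc j) / kk k} \<inter> space P)" for k j
  define Up where "Up k \<omega> = indicator A \<omega> * ennreal (Gm n (X n \<omega>) (c - real (fl k \<omega>) / kk k))" for k \<omega>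
  define Lo where "Lo k \<omega> = indicator A \<omega> * ennreal (Gm n (X n \<omega>) (c - real (Suc (fl k \<omega>)) / kk k))" for k \<omega>
  define Sle where "Sle = {\<omega> \<in> space P. X (Suc n) \<omega> \<le> c}"
  define Slt where "Slt = {\<omega> \<in> space P. X (Suc n) \<omega> < c}"
  have kk0: "kk k > 0" for k by (simp add: kk_def)
  have AP: "A \<in> sets P" using hist_sub[OF A] .
  have Asp: "A \<subseteq> space P" using sets.sets_into_space[OF AP] .
  have Ajh: "Aj k j \<in> sets (history P X n)" for k j
    unfolding Aj_def by (intro sets.Int A hist_X) auto
  have AjP: "Aj k j \<in> sets P" for k j using hist_sub[OF Ajh] .
  have Aj_mem: "\<omega> \<in> Aj k j \<longleftrightarrow> \<omega> \<in> A \<and> j = fl k \<omega>" for k j \<omega>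
    using Asp fl_char[OF Xnn[of \<omega> n] kk0[of k], of j] by (auto simp: Aj_def fl_def)
  have SleP: "Sle \<in> sets P" unfolding Sle_def by measurable
  have SltP: "Slt \<in> sets P" unfolding Slt_def by measurable
  have split: "emeasure P (S \<inter> A) = (\<Sum>j. emeasure P (S \<inter> Aj k j))" if S: "S \<in> sets P" for S k
  proof -
    have "(\<Sum>j. emeasure P (S \<inter> Aj k j)) = emeasure P (\<Union>j. S \<inter> Aj k j)"
    proof (rule suminf_emeasure)
      show "range (\<lambda>j. S \<inter> Aj k j) \<subseteq> sets P" using S AjP by auto
      show "disjoint_family (\<lambda>j. S \<inter> Aj k j)"
        unfolding disjoint_family_on_def using Aj_mem by auto
    qed
    also have "(\<Union>j. S \<inter> Aj k j) = S \<inter> A" using Aj_mem by auto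
    finally show ?thesis by simp
  qed
  have sumint: "(\<Sum>j. \<integral>\<^sup>+\<omega>. indicator (Aj k j) \<omega> * ennreal (Gm n (X n \<omega>) (c - real (f j) / kk k)) \<partial>P)
      = (\<integral>\<^sup>+\<omega>. indicator A \<omega> * ennreal (Gm n (X n \<omega>) (c - real (f (fl k \<omega>)) / kk k)) \<partial>P)" for k f
  proof -
    have m: "(\<lambda>\<omega>. indicator (Aj k j) \<omega> * ennreal (Gm n (X n \<omega>) (c - real (f j) / kk k))) \<in> borel_measurable P" for j
    proof -
      have "(\<lambda>\<omega>. Gm n (X n \<omega>) (c - real (f j) / kk k)) \<in> borel_measurable P"
        by (rule Gm_meas) (auto simp: Xnn)
      then show ?thesis using AjP by measurable
    qed
    have "(\<Sum>j. \<integral>\<^sup>+\<omega>. indicator (Aj k j) \<omega> * ennreal (Gm n (X n \<omega>) (c - real (f j) / kk k)) \<partial>P)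
      = (\<integral>\<^sup>+\<omega>. (\<Sum>j. indicator (Aj k j) \<omega> * ennreal (Gm n (X n \<omega>) (c - real (f j) / kk k))) \<partial>P)"
      by (rule nn_integral_suminf[symmetric]) (use m in auto)
    also have "\<dots> = (\<integral>\<^sup>+\<omega>. indicator A \<omega> * ennreal (Gm n (X n \<omega>) (c - real (f (fl k \<omega>)) / kk k)) \<partial>P)"
    proof (rule nn_integral_cong)
      fix \<omega>
      have "(\<Sum>j. indicator (Aj k j) \<omega> * ennreal (Gm n (X n \<omega>) (c - real (f j) / kk k)))
          = (\<Sum>j\<in>{fl k \<omega>}. indicator (Aj k j) \<omega> * ennreal (Gm n (X n \<omega>) (c - real (f j) / kk k)))"
        by (rule suminf_finite) (auto simp: Aj_mem indicator_def)
      also have "\<dots> = indicator A \<omega> * ennreal (Gm n (X n \<omega>) (c - real (f (fl k \<omega>)) / kk k))"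
        by (simp add: indicator_def Aj_mem)
      finally show "(\<Sum>j. indicator (Aj k j) \<omega> * ennreal (Gm n (X n \<omega>) (c - real (f j) / kk k)))
          = indicator A \<omega> * ennreal (Gm n (X n \<omega>) (c - real (f (fl k \<omega>)) / kk k))" .
    qed
    finally show ?thesis .
  qed
  have upper: "emeasure P (Sle \<inter> A) \<le> integral\<^sup>N P (Up k)" for k
  proof -
    have "emeasure P (Sle \<inter> A) = (\<Sum>j. emeasure P (Sle \<inter> Aj k j))" by (rule split[OF SleP])
    also have "\<dots> \<le> (\<Sum>j. emeasure P ({\<omega> \<in> space P. X (Suc n) \<omega> - X n \<omega> \<le> c - real j / kk k} \<inter> Aj k j))"
    proof (rule suminf_le)
      fix j
      show "emeasure P (Sle \<inter> Aj k j) \<le> emeasure P ({\<omega> \<in> space P. X (Suc n) \<omega> - X n \<omega> \<le> c - real j / kk k} \<inter> Aj k j)"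
      proof (rule emeasure_mono)
        show "Sle \<inter> Aj k j \<subseteq> {\<omega> \<in> space P. X (Suc n) \<omega> - X n \<omega> \<le> c - real j / kk k} \<inter> Aj k j"
          by (auto simp: Sle_def Aj_def)
        show "{\<omega> \<in> space P. X (Suc n) \<omega> - X n \<omega> \<le> c - real j / kk k} \<inter> Aj k j \<in> sets P"
          using AjP by measurable
      qed
    qed auto
    also have "\<dots> = (\<Sum>j. \<integral>\<^sup>+\<omega>. indicator (Aj k j) \<omega> * ennreal (Gm n (X n \<omega>) (c - real j / kk k)) \<partial>P)"
      using sm_e[OF Ajh] by simp
    also have "\<dots> = integral\<^sup>N P (Up k)"
      unfolding Up_def using sumint[of k "\<lambda>j. j"] by simp
    finally show ?thesis .
  qed
  have lower: "integral\<^sup>N P (Lo k) \<le> emeasure P (Slt \<inter> A)" for k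
  proof -
    have "integral\<^sup>N P (Lo k) = (\<Sum>j. \<integral>\<^sup>+\<omega>. indicator (Aj k j) \<omega> * ennreal (Gm n (X n \<omega>) (c - real (Suc j) / kk k)) \<partial>P)"
      unfolding Lo_def using sumint[of k Suc] by simp
    also have "\<dots> = (\<Sum>j. emeasure P ({\<omega> \<in> space P. X (Suc n) \<omega> - X n \<omega> \<le> c - real (Suc j) / kk k} \<inter> Aj k j))"
      using sm_e[OF Ajh] by simp
    also have "\<dots> \<le> (\<Sum>j. emeasure P (Slt \<inter> Aj k j))"
    proof (rule suminf_le)
      fix j
      show "emeasure P ({\<omega> \<in> space P. X (Suc n) \<omega> - X n \<omega> \<le> c - real (Suc j) / kk k} \<inter> Aj k j) \<le> emeasure P (Slt \<inter> Aj k j)"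
      proof (rule emeasure_mono)
        show "{\<omega> \<in> space P. X (Suc n) \<omega> - X n \<omega> \<le> c - real (Suc j) / kk k} \<inter> Aj k j \<subseteq> Slt \<inter> Aj k j"
          by (auto simp: Slt_def Aj_def)
        show "Slt \<inter> Aj k j \<in> sets P" using AjP SltP by auto
      qed
    qed auto
    also have "\<dots> = emeasure P (Slt \<inter> A)" by (rule split[OF SltP, symmetric])
    finally show ?thesis .
  qed
  have ltle: "emeasure P (Slt \<inter> A) \<le> emeasure P (Sle \<inter> A)"
    by (rule emeasure_mono) (auto simp: Slt_def Sle_def intro!: sets.Int SleP AP)
  have GF: "(\<lambda>\<omega>. Gm n (X n \<omega>) (c - X n \<omega>)) \<in> borel_measurable P"
    by (rule Gm_meas) (auto simp: Xnn)
  have Fm: "F \<in> borel_measurable P" unfolding F_def using GF AP by measurable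
  have bnd: "indicator A \<omega> * ennreal (Gm n (X n \<omega>) \<tau>) \<le> 1" if "\<omega> \<in> space P" for \<omega> \<tau>
    using kern_le1[OF kG Xnn[OF that]] by (auto simp: indicator_def)
  have w: "(\<integral>\<^sup>+x. 1 \<partial>P) < \<infinity>" using emeasure_space_1 by simp
  have flim: "(\<lambda>k. real (fl k \<omega>) / kk k) \<longlonglongrightarrow> X n \<omega>" 
       and flim2: "(\<lambda>k. real (Suc (fl k \<omega>)) / kk k) \<longlonglongrightarrow> X n \<omega>" if "\<omega> \<in> space P" for \<omega>
  proof -
    have y: "X n \<omega> \<ge> 0" using Xnn[OF that] .
    have i0: "(\<lambda>k. 1 / kk k) \<longlonglongrightarrow> 0"
      unfolding kk_def using LIMSEQ_inverse_real_of_nat by (simp add: inverse_eq_divide)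
    then have i1: "(\<lambda>k. X n \<omega> - 1 / kk k) \<longlonglongrightarrow> X n \<omega>" 
      using tendsto_diff[OF tendsto_const i0] by simp
    have i2: "(\<lambda>k. X n \<omega> + 1 / kk k) \<longlonglongrightarrow> X n \<omega>" 
      using tendsto_add[OF tendsto_const i0] by simp
    show "(\<lambda>k. real (fl k \<omega>) / kk k) \<longlonglongrightarrow> X n \<omega>"
      by (rule tendsto_sandwich[OF _ _ i1 tendsto_const]) 
         (use fl_bounds[OF y kk0] in \<open>auto simp: fl_def less_imp_le\<close>)
    have "real (Suc (fl k \<omega>)) / kk k = real (fl k \<omega>) / kk k + 1 / kk k" for k
      using kk0[of k] by (simp add: field_simps)
    moreover have "(\<lambda>k. real (fl k \<omega>) / kk k + 1 / kk k) \<longlonglongrightarrow> X n \<omega>"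
      using tendsto_add[OF \<open>(\<lambda>k. real (fl k \<omega>) / kk k) \<longlonglongrightarrow> X n \<omega>\<close> i0] by simp
    ultimately show "(\<lambda>k. real (Suc (fl k \<omega>)) / kk k) \<longlonglongrightarrow> X n \<omega>" by simp
  qed
  have plim: "(\<lambda>k. indicator A \<omega> * ennreal (Gm n (X n \<omega>) (c - s k))) \<longlonglongrightarrow> F \<omega>"
    if "\<omega> \<in> space P" "s \<longlonglongrightarrow> X n \<omega>" for \<omega> s
  proof (cases "\<omega> \<in> A")
    case True
    have "(\<lambda>k. Gm n (X n \<omega>) (c - s k)) \<longlonglongrightarrow> Gm n (X n \<omega>) (c - X n \<omega>)"
      by (rule kern_cont[OF kG Xnn[OF that(1)]]) (intro tendsto_diff tendsto_const that(2))
    then show ?thesis using True by (simp add: F_def tendsto_ennrealI)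
  next
    case False then show ?thesis by (simp add: F_def)
  qed
  have Upm: "Up k \<in> borel_measurable P" for k
  proof -
    have "(\<lambda>\<omega>. Gm n (X n \<omega>) (c - real (fl k \<omega>) / kk k)) \<in> borel_measurable P"
      by (rule Gm_meas) (auto simp: Xnn fl_def)
    then show ?thesis unfolding Up_def using AP by measurable
  qed
  have Lom: "Lo k \<in> borel_measurable P" for k
  proof -
    have "(\<lambda>\<omega>. Gm n (X n \<omega>) (c - real (Suc (fl k \<omega>)) / kk k)) \<in> borel_measurable P"
      by (rule Gm_meas) (auto simp: Xnn fl_def)
    then show ?thesis unfolding Lo_def using AP by measurable
  qed
  have limU: "(\<lambda>k. integral\<^sup>N P (Up k)) \<longlonglongrightarrow> integral\<^sup>N P F"
    by (rule nn_integral_dominated_convergence[OF Upm Fm _ _ w])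
       (auto intro!: AE_I2 bnd plim flim simp: Up_def)
  have limL: "(\<lambda>k. integral\<^sup>N P (Lo k)) \<longlonglongrightarrow> integral\<^sup>N P F"
    by (rule nn_integral_dominated_convergence[OF Lom Fm _ _ w])
       (auto intro!: AE_I2 bnd plim flim2[simplified] simp: Lo_def)
  have 1: "emeasure P (Sle \<inter> A) \<le> integral\<^sup>N P F"
    by (rule LIMSEQ_le_const[OF limU]) (use upper in auto)
  have 2: "integral\<^sup>N P F \<le> emeasure P (Slt \<inter> A)"
    by (rule LIMSEQ_le_const2[OF limL]) (use lower in auto)
  show "emeasure P ({\<omega> \<in> space P. X (Suc n) \<omega> \<le> c} \<inter> A) =
           (\<integral>\<^sup>+\<omega>. indicator A \<omega> * ennreal (Gm n (X n \<omega>) (c - X n \<omega>)) \<partial>P)"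
    using 1 2 ltle unfolding Sle_def[symmetric] F_def[symmetric] by (metis antisym order_trans)
  show "emeasure P ({\<omega> \<in> space P. X (Suc n) \<omega> < c} \<inter> A) =
           (\<integral>\<^sup>+\<omega>. indicator A \<omega> * ennreal (Gm n (X n \<omega>) (c - X n \<omega>)) \<partial>P)"
    using 1 2 ltle unfolding Slt_def[symmetric] F_def[symmetric] by (metis antisym order_trans)
qed

end


context smp begin

lemma renewal_nn:
  assumes f: "f \<in> borel_measurable borel"
  shows "(\<integral>\<^sup>+ s. f s \<partial>renewal_measure P X) = (\<Sum>n. \<integral>\<^sup>+\<omega>. f (X (2 * Suc n) \<omega>) \<partial>P)"
proof -
  define h where "h = (\<lambda>(n, \<omega>). X (2 * Suc n) \<omega>)"
  define Q where "Q = distr (count_space UNIV \<Otimes>\<^sub>M P) borel h"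
  have hm: "h \<in> borel_measurable (count_space UNIV \<Otimes>\<^sub>M P)"
    unfolding h_def by measurable
  have eQ: "emeasure Q A = (\<Sum>n. emeasure P {\<omega> \<in> space P. X (2 * Suc n) \<omega> \<in> A})"
    if A: "A \<in> sets borel" for A
  proof -
    have s: "h -` A \<inter> space (count_space UNIV \<Otimes>\<^sub>M P) \<in> sets (count_space UNIV \<Otimes>\<^sub>M P)"
      using hm A by (rule measurable_sets)
    have "emeasure Q A = emeasure (count_space UNIV \<Otimes>\<^sub>M P) (h -` A \<inter> space (count_space UNIV \<Otimes>\<^sub>M P))"
      unfolding Q_def using hm A by (rule emeasure_distr)
    also have "\<dots> = (\<integral>\<^sup>+n. emeasure P (Pair n -` (h -` A \<inter> space (count_space UNIV \<Otimes>\<^sub>M P))) \<partial>count_space UNIV)"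
      by (rule emeasure_pair_measure_alt[OF s])
    also have "\<dots> = (\<Sum>n. emeasure P (Pair n -` (h -` A \<inter> space (count_space UNIV \<Otimes>\<^sub>M P))))"
      by (rule nn_integral_count_space_nat)
    also have "\<dots> = (\<Sum>n. emeasure P {\<omega> \<in> space P. X (2 * Suc n) \<omega> \<in> A})"
      by (intro suminf_cong arg_cong[where f="emeasure P"]) (auto simp: h_def space_pair_measure)
    finally show ?thesis .
  qed
  have RQ: "renewal_measure P X = Q"
  proof -
    have "renewal_measure P X = measure_of UNIV (sets borel) (emeasure Q)"
      unfolding renewal_measure_def
    proof (rule measure_of_eq)
      fix a :: "real set" assume "a \<in> sigma_sets UNIV (sets borel)"
      then have "a \<in> sets borel" using sets.sigma_sets_eq[of borel] by (metis space_borel)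
      then show "(\<Sum>n. emeasure P {\<omega> \<in> space P. X (2 * Suc n) \<omega> \<in> a}) = emeasure Q a"
        using eQ by simp
    qed simp
    also have "\<dots> = Q"
      using measure_of_of_measure[of Q] by (simp add: Q_def)
    finally show ?thesis .
  qed
  have "(\<integral>\<^sup>+ s. f s \<partial>renewal_measure P X) = (\<integral>\<^sup>+ p. f (h p) \<partial>(count_space UNIV \<Otimes>\<^sub>M P))"
    unfolding RQ Q_def using hm f by (subst nn_integral_distr) auto
  also have "\<dots> = (\<integral>\<^sup>+ n. \<integral>\<^sup>+ \<omega>. f (h (n, \<omega>)) \<partial>P \<partial>count_space UNIV)"
    by (rule nn_integral_fst[symmetric]) (use hm f in measurable)
  also have "\<dots> = (\<Sum>n. \<integral>\<^sup>+\<omega>. f (X (2 * Suc n) \<omega>) \<partial>P)"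
    by (simp add: nn_integral_count_space_nat h_def)
  finally show ?thesis .
qed

end

context smp begin
lemma cyc_meas: "cyc_count X t \<in> P \<rightarrow>\<^sub>M count_space UNIV"
  unfolding cyc_count_def by measurable
lemma Ev_meas: "{\<omega> \<in> space P. age X t \<omega> \<le> x \<and> excess X t \<omega> \<le> z} \<in> sets P"
proof -
  have [measurable]: "cyc_count X t \<in> P \<rightarrow>\<^sub>M count_space UNIV" by (rule cyc_meas)
  show ?thesis unfolding age_def excess_def by measurable
qed

lemma L2:
  assumes A: "A \<in> sets (history P X m)"
  shows "emeasure P (A - {\<omega> \<in> space P. X (Suc m) \<omega> \<le> c}) =
    (\<integral>\<^sup>+\<omega>. indicator A \<omega> * ennreal (1 - Gm m (X m \<omega>) (c - X m \<omega>)) \<partial>P)"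
proof -
  define S where "S = {\<omega> \<in> space P. X (Suc m) \<omega> \<le> c}"
  have SP: "S \<in> sets P" unfolding S_def by measurable
  have AP: "A \<in> sets P" using hist_sub[OF A] .
  have GF: "(\<lambda>\<omega>. Gm m (X m \<omega>) (c - X m \<omega>)) \<in> borel_measurable P"
    by (rule Gm_meas) (auto simp: Xnn)
  have e1: "emeasure P A = emeasure P (S \<inter> A) + emeasure P (A - S)"
  proof -
    have e: "(S \<inter> A) \<union> (A - S) = A" by auto
    have "emeasure P (S \<inter> A) + emeasure P (A - S) = emeasure P ((S \<inter> A) \<union> (A - S))"
      by (rule plus_emeasure) (use SP AP in auto)
    then show ?thesis unfolding e by (rule sym)
  qed
  have e2: "emeasure P A = (\<integral>\<^sup>+\<omega>. indicator A \<omega> * ennreal (Gm m (X m \<omega>) (c - X m \<omega>)) \<partial>P)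
      + (\<integral>\<^sup>+\<omega>. indicator A \<omega> * ennreal (1 - Gm m (X m \<omega>) (c - X m \<omega>)) \<partial>P)"
  proof -
    have "emeasure P A = (\<integral>\<^sup>+\<omega>. indicator A \<omega> \<partial>P)" using AP by simp
    also have "\<dots> = (\<integral>\<^sup>+\<omega>. indicator A \<omega> * ennreal (Gm m (X m \<omega>) (c - X m \<omega>))
        + indicator A \<omega> * ennreal (1 - Gm m (X m \<omega>) (c - X m \<omega>)) \<partial>P)"
    proof (rule nn_integral_cong)
      fix \<omega> assume "\<omega> \<in> space P"
      then have b: "0 \<le> Gm m (X m \<omega>) (c - X m \<omega>)" "Gm m (X m \<omega>) (c - X m \<omega>) \<le> 1"
        using kern_nonneg[OF kG Xnn] kern_le1[OF kG Xnn] by auto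
      have s: "ennreal (Gm m (X m \<omega>) (c - X m \<omega>)) + ennreal (1 - Gm m (X m \<omega>) (c - X m \<omega>)) = 1"
        using ennreal_plus[symmetric, of "Gm m (X m \<omega>) (c - X m \<omega>)" "1 - Gm m (X m \<omega>) (c - X m \<omega>)"] b by simp
      show "indicator A \<omega> = indicator A \<omega> * ennreal (Gm m (X m \<omega>) (c - X m \<omega>))
        + indicator A \<omega> * ennreal (1 - Gm m (X m \<omega>) (c - X m \<omega>))"
        by (cases "\<omega> \<in> A") (simp_all add: s)
    qed
    also have "\<dots> = (\<integral>\<^sup>+\<omega>. indicator A \<omega> * ennreal (Gm m (X m \<omega>) (c - X m \<omega>)) \<partial>P)
      + (\<integral>\<^sup>+\<omega>. indicator A \<omega> * ennreal (1 - Gm m (X m \<omega>) (c - X m \<omega>)) \<partial>P)"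
    proof (rule nn_integral_add)
      show "(\<lambda>\<omega>. indicator A \<omega> * ennreal (Gm m (X m \<omega>) (c - X m \<omega>))) \<in> borel_measurable P"
        using GF AP by measurable
      show "(\<lambda>\<omega>. indicator A \<omega> * ennreal (1 - Gm m (X m \<omega>) (c - X m \<omega>))) \<in> borel_measurable P"
        using GF AP by measurable
    qed
    finally show ?thesis .
  qed
  have e3: "emeasure P (S \<inter> A) = (\<integral>\<^sup>+\<omega>. indicator A \<omega> * ennreal (Gm m (X m \<omega>) (c - X m \<omega>)) \<partial>P)"
    unfolding S_def by (rule L1(1)[OF A])
  have e4: "emeasure P (S \<inter> A) \<noteq> \<infinity>" by (simp add: emeasure_eq_measure)
  have "emeasure P (S \<inter> A) + emeasure P (A - S) = emeasure P (S \<inter> A) +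
     (\<integral>\<^sup>+\<omega>. indicator A \<omega> * ennreal (1 - Gm m (X m \<omega>) (c - X m \<omega>)) \<partial>P)"
    using e1 e2 e3 by metis
  then show ?thesis unfolding S_def[symmetric] using e4 ennreal_add_left_cancel by blast
qed

lemma null_pt: "emeasure P {\<omega> \<in> space P. X (Suc m) \<omega> = c} = 0"
proof -
  have sp: "space P \<in> sets (history P X m)" using sets.top[of "history P X m"] by (simp add: hist_space)
  have le: "emeasure P ({\<omega> \<in> space P. X (Suc m) \<omega> \<le> c} \<inter> space P) = emeasure P ({\<omega> \<in> space P. X (Suc m) \<omega> < c} \<inter> space P)"
    using L1[OF sp] by simp
  have eq: "{\<omega> \<in> space P. X (Suc m) \<omega> = c} = ({\<omega> \<in> space P. X (Suc m) \<omega> \<le> c} \<inter> space P) - ({\<omega> \<in> space P. X (Suc m) \<omega> < c} \<inter> space P)"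
    by auto
  have "emeasure P (({\<omega> \<in> space P. X (Suc m) \<omega> \<le> c} \<inter> space P) - ({\<omega> \<in> space P. X (Suc m) \<omega> < c} \<inter> space P)) = emeasure P ({\<omega> \<in> space P. X (Suc m) \<omega> \<le> c} \<inter> space P) - emeasure P ({\<omega> \<in> space P. X (Suc m) \<omega> < c} \<inter> space P)"
    by (rule emeasure_Diff) (auto simp: emeasure_eq_measure)
  also have "\<dots> = 0" using le by (simp add: emeasure_eq_measure)
  finally show ?thesis unfolding eq .
qed

end

context smp begin

lemma pointwise:
  assumes \<omega>: "\<omega> \<in> space P" and lim: "filterlim (\<lambda>n. X n \<omega>) at_top sequentially"
    and np: "\<forall>n. X (2 * Suc n) \<omega> \<noteq> t - x"
    and t: "t \<ge> 0" and x: "0 \<le> x" "x \<le> t" and z: "z \<ge> 0"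
  shows "(age X t \<omega> \<le> x \<and> excess X t \<omega> \<le> z) \<longleftrightarrow>
     \<not> (t < X 1 \<omega> \<and> \<not> (X 1 \<omega> \<le> t + z \<and> x = t)) \<and>
     (\<forall>n. \<not> (t - x < X (2 * Suc n) \<omega> \<and> X (2 * Suc n) \<omega> \<le> t \<and> t + z < X (Suc (2 * Suc n)) \<omega>)) \<and>
     (\<forall>n. \<not> (X (2 * Suc n) \<omega> \<le> t - x \<and> t < X (Suc (2 * Suc n)) \<omega>))"
proof -
  define K where "K = {n. X (2 * n) \<omega> \<le> t}"
  define N where "N = cyc_count X t \<omega>"
  have "eventually (\<lambda>n. t + 1 \<le> X n \<omega>) sequentially"
    using lim by (simp add: filterlim_at_top)
  then obtain N0 where N0: "\<And>n. n \<ge> N0 \<Longrightarrow> t + 1 \<le> X n \<omega>"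
    by (auto simp: eventually_sequentially)
  have Ksub: "K \<subseteq> {..N0}"
  proof
    fix n assume "n \<in> K"
    then have "X (2 * n) \<omega> \<le> t" by (simp add: K_def)
    then have "\<not> 2 * n \<ge> N0" using N0[of "2 * n"] by linarith
    then show "n \<in> {..N0}" by simp
  qed
  then have fin: "finite K" by (rule finite_subset) simp
  have K0: "0 \<in> K" using X0[OF \<omega>] t by (simp add: K_def)
  have NM: "N = Max K" unfolding N_def cyc_count_def K_def[symmetric]
    using fin K0 by (intro cSup_eq_Max) auto
  have NK: "N \<in> K" unfolding NM using fin K0 by (intro Max_in) auto
  have Nge: "n \<in> K \<Longrightarrow> n \<le> N" for n unfolding NM using fin by simp
  have hN: "X (2 * N) \<omega> \<le> t" using NK by (simp add: K_def)
  have key: "Suc n = N" if "X (2 * Suc n) \<omega> \<le> t" "t < X (Suc (2 * Suc n)) \<omega>" for n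
  proof -
    have "Suc n \<le> N" using Nge[of "Suc n"] that by (simp add: K_def)
    moreover have "\<not> Suc n < N"
    proof
      assume "Suc n < N"
      then have "Suc (2 * Suc n) \<le> 2 * N" by simp
      then have "X (Suc (2 * Suc n)) \<omega> \<le> X (2 * N) \<omega>" using Xle[OF \<omega>] by blast
      then show False using that hN by linarith
    qed
    ultimately show ?thesis by simp
  qed
  have X1: "N \<noteq> 0 \<Longrightarrow> X 1 \<omega> \<le> t"
    using Xle[OF \<omega>, of 1 "2 * N"] hN by simp
  have age: "age X t \<omega> = (t - X (2 * N) \<omega>) * indicator {r. r > t} (X (Suc (2 * N)) \<omega>)"
    by (simp add: age_def N_def)
  have exc: "excess X t \<omega> = (X (Suc (2 * N)) \<omega> - t) * indicator {r. r > t} (X (Suc (2 * N)) \<omega>)"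
    by (simp add: excess_def N_def)
  show ?thesis
  proof (cases "X (Suc (2 * N)) \<omega> > t")
    case False
    have "age X t \<omega> = 0" "excess X t \<omega> = 0" using False by (auto simp: age exc)
    moreover have "X 1 \<omega> \<le> t" using False X1 by (cases "N = 0") auto
    moreover have "\<not> (X (2 * Suc n) \<omega> \<le> t \<and> t < X (Suc (2 * Suc n)) \<omega>)" for n
      using key[of n] False by auto
    ultimately show ?thesis using x z by force
  next
    case True
    have ag: "age X t \<omega> = t - X (2 * N) \<omega>" "excess X t \<omega> = X (Suc (2 * N)) \<omega> - t"
      using True by (auto simp: age exc)
    show ?thesis
    proof (cases N)
      case 0
      have nC: "\<not> (X (2 * Suc n) \<omega> \<le> t \<and> t < X (Suc (2 * Suc n)) \<omega>)" for n
        using key[of n] 0 by auto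
      have "X (2 * N) \<omega> = 0" using 0 X0[OF \<omega>] by simp
      moreover have "\<not> (t - x < X (2 * Suc n) \<omega> \<and> X (2 * Suc n) \<omega> \<le> t \<and> t + z < X (Suc (2 * Suc n)) \<omega>)" for n
        using nC[of n] z by auto
      moreover have "\<not> (X (2 * Suc n) \<omega> \<le> t - x \<and> t < X (Suc (2 * Suc n)) \<omega>)" for n
        using nC[of n] x by auto
      ultimately show ?thesis using ag True 0 x by (auto simp: algebra_simps)
    next
      case (Suc k)
      have nC: "\<not> (X (2 * Suc n) \<omega> \<le> t \<and> t < X (Suc (2 * Suc n)) \<omega>)" if "n \<noteq> k" for n
        using key[of n] Suc that by auto
      have X1': "X 1 \<omega> \<le> t" using X1 Suc by simp
      have npk: "X (2 * N) \<omega> \<noteq> t - x" using np Suc by simp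
      have "(\<forall>n. \<not> (t - x < X (2 * Suc n) \<omega> \<and> X (2 * Suc n) \<omega> \<le> t \<and> t + z < X (Suc (2 * Suc n)) \<omega>)) \<and>
            (\<forall>n. \<not> (X (2 * Suc n) \<omega> \<le> t - x \<and> t < X (Suc (2 * Suc n)) \<omega>))
         \<longleftrightarrow> \<not> (t - x < X (2 * N) \<omega> \<and> t + z < X (Suc (2 * N)) \<omega>) \<and> \<not> (X (2 * N) \<omega> \<le> t - x)"
      proof
        assume h: "(\<forall>n. \<not> (t - x < X (2 * Suc n) \<omega> \<and> X (2 * Suc n) \<omega> \<le> t \<and> t + z < X (Suc (2 * Suc n)) \<omega>)) \<and>
            (\<forall>n. \<not> (X (2 * Suc n) \<omega> \<le> t - x \<and> t < X (Suc (2 * Suc n)) \<omega>))"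
        show "\<not> (t - x < X (2 * N) \<omega> \<and> t + z < X (Suc (2 * N)) \<omega>) \<and> \<not> (X (2 * N) \<omega> \<le> t - x)"
          using h[THEN conjunct1, rule_format, of k] h[THEN conjunct2, rule_format, of k] Suc hN True by auto
      next
        assume h: "\<not> (t - x < X (2 * N) \<omega> \<and> t + z < X (Suc (2 * N)) \<omega>) \<and> \<not> (X (2 * N) \<omega> \<le> t - x)"
        show "(\<forall>n. \<not> (t - x < X (2 * Suc n) \<omega> \<and> X (2 * Suc n) \<omega> \<le> t \<and> t + z < X (Suc (2 * Suc n)) \<omega>)) \<and>
            (\<forall>n. \<not> (X (2 * Suc n) \<omega> \<le> t - x \<and> t < X (Suc (2 * Suc n)) \<omega>))"
        proof (intro conjI allI)
          fix n
          show "\<not> (t - x < X (2 * Suc n) \<omega> \<and> X (2 * Suc n) \<omega> \<le> t \<and> t + z < X (Suc (2 * Suc n)) \<omega>)"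
            using nC[of n] h Suc z by (cases "n = k") auto
          show "\<not> (X (2 * Suc n) \<omega> \<le> t - x \<and> t < X (Suc (2 * Suc n)) \<omega>)"
            using nC[of n] h Suc x by (cases "n = k") auto
        qed
      qed
      then show ?thesis using ag X1' npk True by auto
    qed
  qed
qed

end

context smp begin

lemma PX1: "measure P {\<omega> \<in> space P. X 1 \<omega> \<le> \<tau>} = GY 0 \<tau>"
proof -
  have sp: "space P \<in> sets (history P X 0)" using sets.top[of "history P X 0"] by (simp add: hist_space)
  have "{\<omega> \<in> space P. X (Suc 0) \<omega> - X 0 \<omega> \<le> \<tau>} \<inter> space P = {\<omega> \<in> space P. X 1 \<omega> \<le> \<tau>}"
    using X0 by auto
  moreover have "(\<integral>\<omega>\<in>space P. Gm 0 (X 0 \<omega>) \<tau> \<partial>P) = GY 0 \<tau>"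
  proof -
    have "(\<integral>\<omega>\<in>space P. Gm 0 (X 0 \<omega>) \<tau> \<partial>P) = (\<integral>\<omega>. GY 0 \<tau> \<partial>P)"
      unfolding set_lebesgue_integral_def by (intro Bochner_Integration.integral_cong) (auto simp: X0 Gm_def)
    then show ?thesis by (simp add: prob_space)
  qed
  ultimately show ?thesis using sm_all[OF sp, of \<tau>] by simp
qed

lemma L2Y:
  assumes m: "even m" and I: "I \<in> sets borel"
  shows "(\<integral>\<^sup>+\<omega>. indicator I (X m \<omega>) * ennreal (1 - GY (X m \<omega>) (c - X m \<omega>)) \<partial>P)
      = emeasure P ((X m -` I \<inter> space P) - {\<omega> \<in> space P. X (Suc m) \<omega> \<le> c})"
proof -
  have A: "X m -` I \<inter> space P \<in> sets (history P X m)" by (rule hist_X) (auto simp: I)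
  show ?thesis unfolding L2[OF A]
    by (rule nn_integral_cong) (auto simp: Gm_def m indicator_def)
qed

lemma int_meas:
  assumes I: "I \<in> sets borel" "I \<subseteq> {0..}"
  shows "(\<lambda>s. indicator I s * ennreal (1 - GY s (c - s))) \<in> borel_measurable borel"
proof -
  have "(\<lambda>s. GY (max s 0) (c - s)) \<in> borel_measurable borel"
    by (rule G_meas[OF kY]) auto
  then have "(\<lambda>s. indicator I s * ennreal (1 - GY (max s 0) (c - s))) \<in> borel_measurable borel"
    using I by measurable
  moreover have "indicator I s * ennreal (1 - GY (max s 0) (c - s)) = indicator I s * ennreal (1 - GY s (c - s))" for s
    using I by (cases "s \<in> I") (auto simp: max_def)
  ultimately show ?thesis by simp
qed

lemma cyc_disj:
  assumes \<omega>: "\<omega> \<in> space P" and "X (2 * Suc n) \<omega> \<le> t" "t < X (Suc (2 * Suc n)) \<omega>"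
    "X (2 * Suc m) \<omega> \<le> t" "t < X (Suc (2 * Suc m)) \<omega>"
  shows "n = m"
proof (rule ccontr)
  assume "n \<noteq> m"
  then consider "n < m" | "m < n" by linarith
  then show False
  proof cases
    case 1
    then have "Suc (2 * Suc n) \<le> 2 * Suc m" by simp
    then show False using Xle[OF \<omega>] assms by (metis not_le order_trans)
  next
    case 2
    then have "Suc (2 * Suc m) \<le> 2 * Suc n" by simp
    then show False using Xle[OF \<omega>] assms by (metis not_le order_trans)
  qed
qed

end

context smp begin

lemma main:
  assumes to_infty: "AE \<omega> in P. filterlim (\<lambda>n. X n \<omega>) at_top sequentially"
    and t: "t \<ge> 0" and x: "0 \<le> x" "x \<le> t" and z: "z \<ge> 0"
  shows "measure P {\<omega> \<in> space P. age X t \<omega> \<le> x \<and> excess X t \<omega> \<le> z} =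
     GY 0 t
     - enn2real (\<integral>\<^sup>+ s. indicator {t - x<..t} s * ennreal (1 - GY s (t + z - s)) \<partial>renewal_measure P X)
     - enn2real (\<integral>\<^sup>+ s. indicator {0..t - x} s * ennreal (1 - GY s (t - s)) \<partial>renewal_measure P X)
     + (if x = t then GY 0 (t + z) - GY 0 t else 0)"
proof -
  define C where "C n = (X (2 * Suc n) -` {t - x<..t} \<inter> space P) - {\<omega> \<in> space P. X (Suc (2 * Suc n)) \<omega> \<le> t + z}" for n
  define D where "D n = (X (2 * Suc n) -` {0..t - x} \<inter> space P) - {\<omega> \<in> space P. X (Suc (2 * Suc n)) \<omega> \<le> t}" for n
  define Y0 where "Y0 = {\<omega> \<in> space P. t < X 1 \<omega>}"
  define G0 where "G0 = {\<omega> \<in> space P. t < X 1 \<omega> \<and> X 1 \<omega> \<le> t + z \<and> x = t}"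
  define Ev where "Ev = {\<omega> \<in> space P. age X t \<omega> \<le> x \<and> excess X t \<omega> \<le> z}"
  define R where "R = space P - ((Y0 - G0) \<union> (\<Union>n. C n) \<union> (\<Union>n. D n))"
  have CP: "C n \<in> sets P" for n unfolding C_def by measurable
  have DP: "D n \<in> sets P" for n unfolding D_def by measurable
  have Y0P: "Y0 \<in> sets P" unfolding Y0_def by measurable
  have G0P: "G0 \<in> sets P" unfolding G0_def by measurable
  have UCP: "(\<Union>n. C n) \<in> sets P" using CP by auto
  have UDP: "(\<Union>n. D n) \<in> sets P" using DP by auto
  have RP: "R \<in> sets P" unfolding R_def using CP DP Y0P G0P by auto
  have EvP: "Ev \<in> sets P" unfolding Ev_def by (rule Ev_meas)
  have Cdisj: "disjoint_family C"
    unfolding disjoint_family_on_def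
  proof (intro ballI impI)
    fix n m :: nat assume "n \<noteq> m"
    show "C n \<inter> C m = {}"
    proof (rule ccontr)
      assume "C n \<inter> C m \<noteq> {}"
      then obtain \<omega> where "\<omega> \<in> C n" "\<omega> \<in> C m" by blast
      then have "n = m" using z by (intro cyc_disj[of \<omega> n t m]) (auto simp: C_def)
      then show False using \<open>n \<noteq> m\<close> by simp
    qed
  qed
  have Ddisj: "disjoint_family D"
    unfolding disjoint_family_on_def
  proof (intro ballI impI)
    fix n m :: nat assume "n \<noteq> m"
    show "D n \<inter> D m = {}"
    proof (rule ccontr)
      assume "D n \<inter> D m \<noteq> {}"
      then obtain \<omega> where "\<omega> \<in> D n" "\<omega> \<in> D m" by blast
      then have "n = m" using x by (intro cyc_disj[of \<omega> n t m]) (auto simp: D_def)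
      then show False using \<open>n \<noteq> m\<close> by simp
    qed
  qed
  have intC: "(\<integral>\<^sup>+ s. indicator {t - x<..t} s * ennreal (1 - GY s (t + z - s)) \<partial>renewal_measure P X)
      = emeasure P (\<Union>n. C n)"
  proof -
    have "(\<integral>\<^sup>+ s. indicator {t - x<..t} s * ennreal (1 - GY s (t + z - s)) \<partial>renewal_measure P X)
      = (\<Sum>n. \<integral>\<^sup>+\<omega>. indicator {t - x<..t} (X (2 * Suc n) \<omega>) * ennreal (1 - GY (X (2 * Suc n) \<omega>) (t + z - X (2 * Suc n) \<omega>)) \<partial>P)"
      by (rule renewal_nn[OF int_meas]) (use x in auto)
    also have "\<dots> = (\<Sum>n. emeasure P (C n))"
      unfolding C_def by (intro suminf_cong L2Y) auto
    also have "\<dots> = emeasure P (\<Union>n. C n)"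
      by (rule suminf_emeasure) (use CP Cdisj in auto)
    finally show ?thesis .
  qed
  have intD: "(\<integral>\<^sup>+ s. indicator {0..t - x} s * ennreal (1 - GY s (t - s)) \<partial>renewal_measure P X)
      = emeasure P (\<Union>n. D n)"
  proof -
    have "(\<integral>\<^sup>+ s. indicator {0..t - x} s * ennreal (1 - GY s (t - s)) \<partial>renewal_measure P X)
      = (\<Sum>n. \<integral>\<^sup>+\<omega>. indicator {0..t - x} (X (2 * Suc n) \<omega>) * ennreal (1 - GY (X (2 * Suc n) \<omega>) (t - X (2 * Suc n) \<omega>)) \<partial>P)"
      by (rule renewal_nn[OF int_meas]) auto
    also have "\<dots> = (\<Sum>n. emeasure P (D n))"
      unfolding D_def by (intro suminf_cong L2Y) auto
    also have "\<dots> = emeasure P (\<Union>n. D n)"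
      by (rule suminf_emeasure) (use DP Ddisj in auto)
    finally show ?thesis .
  qed
  have AEpt: "AE \<omega> in P. \<forall>n. X (2 * Suc n) \<omega> \<noteq> t - x"
    unfolding AE_all_countable
  proof
    fix n
    show "AE \<omega> in P. X (2 * Suc n) \<omega> \<noteq> t - x"
    proof (rule AE_I')
      show "{\<omega> \<in> space P. X (Suc (Suc (2 * n))) \<omega> = t - x} \<in> null_sets P"
        using null_pt[of "Suc (2 * n)" "t - x"] by (intro null_setsI) (auto)
      show "{\<omega> \<in> space P. \<not> X (2 * Suc n) \<omega> \<noteq> t - x} \<subseteq> {\<omega> \<in> space P. X (Suc (Suc (2 * n))) \<omega> = t - x}"
        by auto
    qed
  qed
  have AEeq: "AE \<omega> in P. \<omega> \<in> Ev \<longleftrightarrow> \<omega> \<in> R"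
    using to_infty AEpt AE_space
  proof eventually_elim
    case (elim \<omega>)
    note pw = pointwise[OF elim(3) elim(1) elim(2) t x z]
    show ?case using pw Xnn[OF elim(3), of "2 * Suc _"]
      by (auto simp: Ev_def R_def C_def D_def Y0_def G0_def not_le)
  qed
  have mEv: "measure P Ev = measure P R"
    by (rule measure_eq_AE[OF AEeq EvP RP])
  have d1: "(Y0 - G0) \<inter> (\<Union>n. C n) = {}"
  proof -
    have False if "\<omega> \<in> Y0" "\<omega> \<in> C n" for \<omega> n
      using that Xle[of \<omega> 1 "2 * Suc n"] by (auto simp: Y0_def C_def)
    then show ?thesis by blast
  qed
  have d2: "((Y0 - G0) \<union> (\<Union>n. C n)) \<inter> (\<Union>n. D n) = {}"
  proof -
    have False if "\<omega> \<in> Y0" "\<omega> \<in> D n" for \<omega> n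
      using that Xle[of \<omega> 1 "2 * Suc n"] x by (auto simp: Y0_def D_def)
    moreover have False if "\<omega> \<in> C n" "\<omega> \<in> D m" for \<omega> n m
    proof (cases "n = m")
      case True then show False using that by (auto simp: C_def D_def)
    next
      case False
      have "n = m" using that z x by (intro cyc_disj[of \<omega> n t m]) (auto simp: C_def D_def)
      then show False using False by simp
    qed
    ultimately show ?thesis by blast
  qed
  have mR: "measure P R = 1 - (measure P (Y0 - G0) + measure P (\<Union>n. C n) + measure P (\<Union>n. D n))"
  proof -
    have "measure P R = 1 - measure P ((Y0 - G0) \<union> (\<Union>n. C n) \<union> (\<Union>n. D n))"
      unfolding R_def by (rule prob_compl) (use Y0P G0P UCP UDP in auto)
    also have "measure P ((Y0 - G0) \<union> (\<Union>n. C n) \<union> (\<Union>n. D n)) =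
        measure P ((Y0 - G0) \<union> (\<Union>n. C n)) + measure P (\<Union>n. D n)"
      by (rule finite_measure_Union) (use Y0P G0P UCP UDP d2 in auto)
    also have "measure P ((Y0 - G0) \<union> (\<Union>n. C n)) = measure P (Y0 - G0) + measure P (\<Union>n. C n)"
      by (rule finite_measure_Union) (use Y0P G0P UCP d1 in auto)
    finally show ?thesis .
  qed
  have mY0: "measure P Y0 = 1 - GY 0 t"
  proof -
    have "Y0 = space P - {\<omega> \<in> space P. X 1 \<omega> \<le> t}" by (auto simp: Y0_def)
    then have "measure P Y0 = 1 - measure P {\<omega> \<in> space P. X 1 \<omega> \<le> t}"
      by (simp add: prob_compl)
    then show ?thesis using PX1 by simp
  qed
  have mG0: "measure P G0 = (if x = t then GY 0 (t + z) - GY 0 t else 0)"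
  proof (cases "x = t")
    case True
    have "G0 = {\<omega> \<in> space P. X 1 \<omega> \<le> t + z} - {\<omega> \<in> space P. X 1 \<omega> \<le> t}"
      using True by (auto simp: G0_def)
    moreover have "measure P ({\<omega> \<in> space P. X 1 \<omega> \<le> t + z} - {\<omega> \<in> space P. X 1 \<omega> \<le> t}) =
       measure P {\<omega> \<in> space P. X 1 \<omega> \<le> t + z} - measure P {\<omega> \<in> space P. X 1 \<omega> \<le> t}"
      by (rule finite_measure_Diff) (use z in auto)
    ultimately show ?thesis using True PX1 by simp
  next
    case False
    then have "G0 = {}" by (auto simp: G0_def)
    then show ?thesis using False by simp
  qed
  have mYG: "measure P (Y0 - G0) = measure P Y0 - measure P G0"
    by (rule finite_measure_Diff) (use Y0P G0P in \<open>auto simp: Y0_def G0_def\<close>)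
  show ?thesis
    unfolding Ev_def[symmetric] mEv mR intC intD measure_def[symmetric] mYG mY0 mG0
    by simp
qed

end

theorem proposition3:
  fixes P :: "'a measure" and X :: "nat \<Rightarrow> 'a \<Rightarrow> real"
    and GY GZ gY gZ :: "real \<Rightarrow> real \<Rightarrow> real"
  assumes "prob_space P"
    and meas: "\<And>n. X n \<in> borel_measurable P"
    and X0: "\<And>\<omega>. \<omega> \<in> space P \<Longrightarrow> X 0 \<omega> = 0"
    and mono: "\<And>n \<omega>. \<omega> \<in> space P \<Longrightarrow> X n \<omega> \<le> X (Suc n) \<omega>"
    and kY: "sm_kernel GY gY" and kZ: "sm_kernel GZ gZ"
    and semi_markov: "\<And>n \<tau> A. \<tau> \<ge> 0 \<Longrightarrow> A \<in> sets (history P X n) \<Longrightarrow>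
          measure P ({\<omega> \<in> space P. X (Suc n) \<omega> - X n \<omega> \<le> \<tau>} \<inter> A) =
          (\<integral>\<omega>\<in>A. (if even n then GY (X n \<omega>) \<tau> else GZ (X n \<omega>) \<tau>) \<partial>P)"
    and to_infty: "AE \<omega> in P. filterlim (\<lambda>n. X n \<omega>) at_top sequentially"
    and t: "t \<ge> 0" and x: "0 \<le> x" "x \<le> t" and z: "z \<ge> 0"
  shows "measure P {\<omega> \<in> space P. age X t \<omega> \<le> x \<and> excess X t \<omega> \<le> z} =
     GY 0 t
     - enn2real (\<integral>\<^sup>+ s. indicator {t - x<..t} s * ennreal (1 - GY s (t + z - s)) \<partial>renewal_measure P X)
     - enn2real (\<integral>\<^sup>+ s. indicator {0..t - x} s * ennreal (1 - GY s (t - s)) \<partial>renewal_measure P X)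
     + (if x = t then GY 0 (t + z) - GY 0 t else 0)"
proof -
  interpret smp P X GY GZ gY gZ
    by (intro smp.intro smp_axioms.intro) (use assms in auto)
  show ?thesis by (rule main[OF to_infty t x z])
qed

end
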